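(* In the setting described in the context, assume $x_h^2\beta>3$ and $n>\frac1{2\alpha x_h^2\beta}-\frac1{x_h^2\beta}$, and let $\dot k=\frac1{2n}\log_\lambda\Big(\frac1{1+\frac1{\alpha\eta}(1-\lambda^2)}\Big)-1$. Then $$(\hat\sigma^1_{\lceil\dot k\rceil n+n})^2\le(1+2e^{\frac1{x_h^2\beta}})(\hat\lambda\lambda^{n-1})^2\frac1\alpha(\hat\lambda\lambda^{n-1})^{2\lceil\dot k\rceil},$$ and for every $r\in\{2,\dots,n\}$, $$(\hat\sigma^r_{\lceil\dot k\rceil n+n})^2\le6(\hat\lambda\lambda^{n-r})^2\frac1\alpha(\hat\lambda\lambda^{n-1})^{2\lceil\dot k\rceil}.$$
   Context: Fix $\alpha,\beta,x_h,c>0$ and an integer $n\ge2$. Model: $y=\theta x+\xi$, $\xi\sim\mathcal N(0,\beta^{-1})$, prior $\theta\sim\mathcal N(0,\alpha^{-1})$. Database $D_2$ consists of $n-1$ copies of $(x_h,cx_h)$ and one copy of $(x_h/2,cx_h/2)$. Cyclic SGLD with batch size 1 and step size $\eta=\frac2{(\alpha+nx_h^2\beta)^2}$: $\theta_0\sim\mathcal N(0,\alpha^{-1})$, $\theta_{j+1}=\theta_j+\frac\eta2[-\alpha\theta_j+n\beta(y_{i_j}-\theta_jx_{i_j})x_{i_j}]+\sqrt\eta\,\xi_j$ with $\xi_j\sim\mathcal N(0,1)$ i.i.d. independent of $\theta_0$; the database is shuffled once uniformly and its samples are then used cyclically. Let $r\in\{1,\dots,n\}$ be the position within each epoch at which $(x_h/2,cx_h/2)$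 is used; conditionally on $r$ the $j$-th iterate is $\hat\theta^r_j\sim\mathcal N(\hat\mu^r_j,(\hat\sigma^r_j)^2)$. Set $\lambda=1-\frac\eta2(\alpha+nx_h^2\beta)$, $\hat\lambda=1-\frac\eta2(\alpha+n\frac{x_h^2}4\beta)$. *)

theory Defs
  imports "HOL-Probability.Probability"
begin

definition sgld_eta :: "real \<Rightarrow> real \<Rightarrow> real \<Rightarrow> nat \<Rightarrow> real" where
  "sgld_eta \<alpha> \<beta> xh n = 2 / (\<alpha> + real n * xh\<^sup>2 * \<beta>)\<^sup>2"

definition sgld_lambda :: "real \<Rightarrow> real \<Rightarrow> real \<Rightarrow> nat \<Rightarrow> real" where
  "sgld_lambda \<alpha> \<beta> xh n = 1 - sgld_eta \<alpha> \<beta> xh n / 2 * (\<alpha> + real n * xh\<^sup>2 * \<beta>)"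

definition sgld_lambda_hat :: "real \<Rightarrow> real \<Rightarrow> real \<Rightarrow> nat \<Rightarrow> real" where
  "sgld_lambda_hat \<alpha> \<beta> xh n = 1 - sgld_eta \<alpha> \<beta> xh n / 2 * (\<alpha> + real n * (xh\<^sup>2 / 4) * \<beta>)"

text \<open>Input x used at iteration j (0-based) when the sample (xh/2, c xh/2) sits at
  position r in {1..n} of the (once shuffled) epoch; all other positions hold (xh, c xh).\<close>
definition sgld_x :: "real \<Rightarrow> nat \<Rightarrow> nat \<Rightarrow> nat \<Rightarrow> real" where
  "sgld_x xh n r j = (if j mod n + 1 = r then xh / 2 else xh)"

fun sgld_iter :: "real \<Rightarrow> real \<Rightarrow> real \<Rightarrow> real \<Rightarrow> nat \<Rightarrow> nat \<Rightarrow> real \<Rightarrow> (nat \<Rightarrow> real) \<Rightarrow> nat \<Rightarrow> real" where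
  "sgld_iter \<alpha> \<beta> xh c n r t0 xi 0 = t0"
| "sgld_iter \<alpha> \<beta> xh c n r t0 xi (Suc j) =
     (let \<theta> = sgld_iter \<alpha> \<beta> xh c n r t0 xi j;
          \<eta> = sgld_eta \<alpha> \<beta> xh n;
          x = sgld_x xh n r j;
          y = c * x
      in \<theta> + \<eta> / 2 * (- \<alpha> * \<theta> + real n * \<beta> * (y - \<theta> * x) * x) + sqrt \<eta> * xi j)"

end

theory Submission
  imports Defs "HOL-Probability.Probability"
begin


lemma (in prob_space) var_lin:
  fixes Z :: "'i \<Rightarrow> 'a \<Rightarrow> real" and c :: "'i \<Rightarrow> real"
  assumes fin: "finite I" and ind: "indep_vars (\<lambda>_. borel) Z I"
    and int1: "\<And>i. i \<in> I \<Longrightarrow> integrable M (Z i)"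
    and int2: "\<And>i. i \<in> I \<Longrightarrow> integrable M (\<lambda>\<omega>. (Z i \<omega>)\<^sup>2)"
    and mean: "\<And>i. i \<in> I \<Longrightarrow> expectation (Z i) = 0"
  shows "variance (\<lambda>\<omega>. (\<Sum>i\<in>I. c i * Z i \<omega>) + b) = (\<Sum>i\<in>I. (c i)\<^sup>2 * expectation (\<lambda>\<omega>. (Z i \<omega>)\<^sup>2))"
proof -
  have intp: "integrable M (\<lambda>\<omega>. Z i \<omega> * Z k \<omega>)" if "i \<in> I" "k \<in> I" for i k
  proof (cases "i = k")
    case True then show ?thesis using int2[OF that(1)] by (simp add: power2_eq_square)
  next
    case False
    have "indep_vars (\<lambda>_. borel) Z {i, k}" by (rule indep_vars_subset[OF ind]) (use that in auto)
    then have "integrable M (\<lambda>\<omega>. \<Prod>l\<in>{i,k}. Z l \<omega>)"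
      using that int1 by (intro indep_vars_integrable) auto
    then show ?thesis using False by simp
  qed
  have Ep: "expectation (\<lambda>\<omega>. Z i \<omega> * Z k \<omega>) = (if i = k then expectation (\<lambda>\<omega>. (Z i \<omega>)\<^sup>2) else 0)"
    if "i \<in> I" "k \<in> I" for i k
  proof (cases "i = k")
    case True then show ?thesis by (simp add: power2_eq_square)
  next
    case False
    have "indep_vars (\<lambda>_. borel) Z {i, k}" by (rule indep_vars_subset[OF ind]) (use that in auto)
    then have "expectation (\<lambda>\<omega>. \<Prod>l\<in>{i,k}. Z l \<omega>) = (\<Prod>l\<in>{i,k}. expectation (Z l))"
      using that int1 by (intro indep_vars_lebesgue_integral) auto
    then show ?thesis using False mean that by simp
  qed
  have intS: "integrable M (\<lambda>\<omega>. (\<Sum>i\<in>I. c i * Z i \<omega>) + b)"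
    using int1 by (intro Bochner_Integration.integrable_add Bochner_Integration.integrable_sum Bochner_Integration.integrable_mult_right) auto
  have ES: "expectation (\<lambda>\<omega>. (\<Sum>i\<in>I. c i * Z i \<omega>) + b) = b"
  proof -
    have "expectation (\<lambda>\<omega>. (\<Sum>i\<in>I. c i * Z i \<omega>) + b) = expectation (\<lambda>\<omega>. (\<Sum>i\<in>I. c i * Z i \<omega>)) + expectation (\<lambda>\<omega>. b)"
      using int1 by (intro Bochner_Integration.integral_add Bochner_Integration.integrable_sum Bochner_Integration.integrable_mult_right) auto
    also have "expectation (\<lambda>\<omega>. (\<Sum>i\<in>I. c i * Z i \<omega>)) = (\<Sum>i\<in>I. expectation (\<lambda>\<omega>. c i * Z i \<omega>))"
      using int1 by (intro Bochner_Integration.integral_sum Bochner_Integration.integrable_mult_right) auto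
    also have "\<dots> = 0" using mean by simp
    finally show ?thesis by (simp add: prob_space)
  qed
  have sq: "\<And>\<omega>. ((\<Sum>i\<in>I. c i * Z i \<omega>) + b - b)\<^sup>2 = (\<Sum>i\<in>I. \<Sum>k\<in>I. c i * c k * (Z i \<omega> * Z k \<omega>))"
    by (simp add: power2_eq_square sum_product algebra_simps)
  have "variance (\<lambda>\<omega>. (\<Sum>i\<in>I. c i * Z i \<omega>) + b) = expectation (\<lambda>\<omega>. \<Sum>i\<in>I. \<Sum>k\<in>I. c i * c k * (Z i \<omega> * Z k \<omega>))"
    unfolding ES sq ..
  also have "\<dots> = (\<Sum>i\<in>I. \<Sum>k\<in>I. c i * c k * expectation (\<lambda>\<omega>. Z i \<omega> * Z k \<omega>))"
    using intp by (simp add: Bochner_Integration.integral_sum Bochner_Integration.integrable_sum)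
  also have "\<dots> = (\<Sum>i\<in>I. \<Sum>k\<in>I. if i = k then c i * c k * expectation (\<lambda>\<omega>. (Z i \<omega>)\<^sup>2) else 0)"
    by (intro sum.cong refl) (simp add: Ep)
  also have "\<dots> = (\<Sum>i\<in>I. (c i)\<^sup>2 * expectation (\<lambda>\<omega>. (Z i \<omega>)\<^sup>2))"
    using fin by (simp add: sum.delta power2_eq_square)
  finally show ?thesis .
qed



fun cf :: "(nat \<Rightarrow> real) \<Rightarrow> real \<Rightarrow> nat \<Rightarrow> nat option \<Rightarrow> real" where
  "cf fac s 0 i = (if i = None then 1 else 0)"
| "cf fac s (Suc j) i = (if i = Some j then s else fac j * cf fac s j i)"

fun cb :: "(nat \<Rightarrow> real) \<Rightarrow> (nat \<Rightarrow> real) \<Rightarrow> nat \<Rightarrow> real" where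
  "cb fac g 0 = 0"
| "cb fac g (Suc j) = fac j * cb fac g j + g j"

fun vrec :: "(nat \<Rightarrow> real) \<Rightarrow> real \<Rightarrow> real \<Rightarrow> nat \<Rightarrow> real" where
  "vrec fac v0 e 0 = v0"
| "vrec fac v0 e (Suc j) = (fac j)\<^sup>2 * vrec fac v0 e j + e"

definition Ix :: "nat \<Rightarrow> nat option set" where
  "Ix j = insert None (Some ` {..<j})"

lemma Ix_Suc: "Ix (Suc j) = insert (Some j) (Ix j)" and Ix_fin: "finite (Ix j)"
  and Ix_notin: "Some j \<notin> Ix j"
  by (auto simp: Ix_def lessThan_Suc)

definition Zc :: "real \<Rightarrow> (nat \<Rightarrow> real) \<Rightarrow> nat option \<Rightarrow> real" where
  "Zc t0 xi i = (case i of None \<Rightarrow> t0 | Some k \<Rightarrow> xi k)"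

lemma step_alg: "(t::real) + e / 2 * (- a * t + m * b * (c * x - t * x) * x) + s * z
   = (1 - e / 2 * (a + m * b * x\<^sup>2)) * t + e / 2 * (m * b * c * x\<^sup>2) + s * z"
  by (simp add: algebra_simps power2_eq_square)

lemma lin_aux: "(T::real) = s * z + f * S \<Longrightarrow> I' = f * I + g + s * z \<Longrightarrow> I = S + b \<Longrightarrow> I' = T + (f * b + g)"
  by (simp add: algebra_simps)

lemma iter_lin:
  fixes \<alpha> \<beta> xh c :: real and n r :: nat
  defines "fac \<equiv> (\<lambda>j. 1 - sgld_eta \<alpha> \<beta> xh n / 2 * (\<alpha> + real n * \<beta> * (sgld_x xh n r j)\<^sup>2))"
    and "g \<equiv> (\<lambda>j. sgld_eta \<alpha> \<beta> xh n / 2 * (real n * \<beta> * c * (sgld_x xh n r j)\<^sup>2))"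
  shows "sgld_iter \<alpha> \<beta> xh c n r t0 xi j =
    (\<Sum>i\<in>Ix j. cf fac (sqrt (sgld_eta \<alpha> \<beta> xh n)) j i * Zc t0 xi i) + cb fac g j"
proof (induction j)
  case 0
  show ?case by (simp add: Ix_def Zc_def)
next
  case (Suc j)
  have "(\<Sum>i\<in>Ix (Suc j). cf fac (sqrt (sgld_eta \<alpha> \<beta> xh n)) (Suc j) i * Zc t0 xi i)
     = sqrt (sgld_eta \<alpha> \<beta> xh n) * xi j + fac j * (\<Sum>i\<in>Ix j. cf fac (sqrt (sgld_eta \<alpha> \<beta> xh n)) j i * Zc t0 xi i)"
    unfolding Ix_Suc using Ix_fin Ix_notin
    by (simp add: sum_distrib_left Zc_def mult.assoc cong: sum.cong split: if_split)
      (intro sum.cong refl, auto)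
  moreover have "sgld_iter \<alpha> \<beta> xh c n r t0 xi (Suc j) = fac j * sgld_iter \<alpha> \<beta> xh c n r t0 xi j + g j + sqrt (sgld_eta \<alpha> \<beta> xh n) * xi j"
    unfolding sgld_iter.simps Let_def fac_def g_def by (rule step_alg)
  ultimately show ?case using Suc.IH unfolding cb.simps by (rule lin_aux)
qed

lemma vrec_sum:
  "(\<Sum>i\<in>Ix j. (cf fac s j i)\<^sup>2 * (case i of None \<Rightarrow> v0 | Some _ \<Rightarrow> 1)) = vrec fac v0 (s\<^sup>2) j"
proof (induction j)
  case 0 show ?case by (simp add: Ix_def)
next
  case (Suc j)
  have "(\<Sum>i\<in>Ix (Suc j). (cf fac s (Suc j) i)\<^sup>2 * (case i of None \<Rightarrow> v0 | Some _ \<Rightarrow> 1))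
     = s\<^sup>2 + (fac j)\<^sup>2 * (\<Sum>i\<in>Ix j. (cf fac s j i)\<^sup>2 * (case i of None \<Rightarrow> v0 | Some _ \<Rightarrow> 1))"
    unfolding Ix_Suc using Ix_fin Ix_notin
    by (simp add: sum_distrib_left)
      (intro sum.cong refl, auto simp: power_mult_distrib)
  then show ?case using Suc by simp
qed

lemma var_iter:
  fixes \<alpha> \<beta> xh c :: real and n r :: nat
    and M :: "'w measure" and \<theta>0 :: "'w \<Rightarrow> real" and \<xi> :: "nat \<Rightarrow> 'w \<Rightarrow> real"
  assumes apos: "\<alpha> > 0" and M: "prob_space M"
    and init: "distributed M lborel \<theta>0 (normal_density 0 (1 / sqrt \<alpha>))"
    and noise: "\<And>j. distributed M lborel (\<xi> j) (normal_density 0 1)"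
    and indep: "prob_space.indep_vars M (\<lambda>_. borel)
                  (\<lambda>i. case i of None \<Rightarrow> \<theta>0 | Some j \<Rightarrow> \<xi> j) UNIV"
  shows "prob_space.variance M (\<lambda>\<omega>. sgld_iter \<alpha> \<beta> xh c n r (\<theta>0 \<omega>) (\<lambda>j. \<xi> j \<omega>) N)
     = vrec (\<lambda>j. 1 - sgld_eta \<alpha> \<beta> xh n / 2 * (\<alpha> + real n * \<beta> * (sgld_x xh n r j)\<^sup>2))
            (1 / \<alpha>) (sgld_eta \<alpha> \<beta> xh n) N"
proof -
  interpret prob_space M by (rule M)
  define fac where "fac = (\<lambda>j. 1 - sgld_eta \<alpha> \<beta> xh n / 2 * (\<alpha> + real n * \<beta> * (sgld_x xh n r j)\<^sup>2))"
  define g where "g = (\<lambda>j. sgld_eta \<alpha> \<beta> xh n / 2 * (real n * \<beta> * c * (sgld_x xh n r j)\<^sup>2))"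
  define s where "s = sqrt (sgld_eta \<alpha> \<beta> xh n)"
  define Z where "Z = (\<lambda>i. case i of None \<Rightarrow> \<theta>0 | Some j \<Rightarrow> \<xi> j)"
  have eta0: "sgld_eta \<alpha> \<beta> xh n \<ge> 0" by (simp add: sgld_eta_def)
  have sig: "0 < 1 / sqrt \<alpha>" using apos by simp
  have feq: "(\<lambda>\<omega>. sgld_iter \<alpha> \<beta> xh c n r (\<theta>0 \<omega>) (\<lambda>j. \<xi> j \<omega>) N)
      = (\<lambda>\<omega>. (\<Sum>i\<in>Ix N. cf fac s N i * Z i \<omega>) + cb fac g N)"
  proof
    fix \<omega>
    have "\<And>i. Zc (\<theta>0 \<omega>) (\<lambda>j. \<xi> j \<omega>) i = Z i \<omega>" by (auto simp: Zc_def Z_def split: option.split)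
    then show "sgld_iter \<alpha> \<beta> xh c n r (\<theta>0 \<omega>) (\<lambda>j. \<xi> j \<omega>) N = (\<Sum>i\<in>Ix N. cf fac s N i * Z i \<omega>) + cb fac g N"
      unfolding iter_lin fac_def g_def s_def by simp
  qed
  have int1: "integrable M (Z i)" for i
  proof (cases i)
    case None
    then show ?thesis unfolding Z_def using distributed_integrable_var[OF init] integrable_normal_moment_nz_1[OF sig] by simp
  next
    case (Some j)
    then show ?thesis unfolding Z_def using distributed_integrable_var[OF noise[of j]] integrable_normal_moment_nz_1 by simp
  qed
  have int2: "integrable M (\<lambda>\<omega>. (Z i \<omega>)\<^sup>2)" for i
  proof (cases i)
    case None
    then show ?thesis unfolding Z_def
      using distributed_integrable[OF init, of "\<lambda>x. x\<^sup>2"] integrable_normal_moment[OF sig, where \<mu>=0 and k=2] by simp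
  next
    case (Some j)
    then show ?thesis unfolding Z_def
      using distributed_integrable[OF noise[of j], of "\<lambda>x. x\<^sup>2"] integrable_normal_moment[where \<sigma>=1 and \<mu>=0 and k=2] by simp
  qed
  have mean: "expectation (Z i) = 0" for i
  proof (cases i)
    case None
    then show ?thesis unfolding Z_def using normal_distributed_expectation[OF sig init] by simp
  next
    case (Some j)
    then show ?thesis unfolding Z_def using normal_distributed_expectation[OF _ noise[of j]] by simp
  qed
  have sq: "expectation (\<lambda>\<omega>. (Z i \<omega>)\<^sup>2) = (case i of None \<Rightarrow> 1 / \<alpha> | Some _ \<Rightarrow> 1)" for i
  proof (cases i)
    case None
    have "variance \<theta>0 = (1 / sqrt \<alpha>)\<^sup>2" by (rule normal_distributed_variance[OF sig init])
    then show ?thesis using None mean[of None] apos unfolding Z_def by (simp add: power_divide)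
  next
    case (Some j)
    have "variance (\<xi> j) = 1\<^sup>2" by (rule normal_distributed_variance[OF _ noise[of j]]) simp
    then show ?thesis using Some mean[of "Some j"] unfolding Z_def by simp
  qed
  have ind: "indep_vars (\<lambda>_. borel) Z (Ix N)"
    using indep_vars_subset[OF indep[folded Z_def]] by simp
  have "variance (\<lambda>\<omega>. (\<Sum>i\<in>Ix N. cf fac s N i * Z i \<omega>) + cb fac g N)
     = (\<Sum>i\<in>Ix N. (cf fac s N i)\<^sup>2 * expectation (\<lambda>\<omega>. (Z i \<omega>)\<^sup>2))"
    by (rule var_lin[OF Ix_fin ind int1 int2 mean])
  also have "\<dots> = vrec fac (1 / \<alpha>) (s\<^sup>2) N"
    unfolding sq by (rule vrec_sum)
  finally have fin: "variance (\<lambda>\<omega>. (\<Sum>i\<in>Ix N. cf fac s N i * Z i \<omega>) + cb fac g N) = vrec fac (1 / \<alpha>) (s\<^sup>2) N" .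
  have s2: "s\<^sup>2 = sgld_eta \<alpha> \<beta> xh n" using eta0 by (simp add: s_def)
  have feq': "\<And>\<omega>. sgld_iter \<alpha> \<beta> xh c n r (\<theta>0 \<omega>) (\<lambda>j. \<xi> j \<omega>) N = (\<Sum>i\<in>Ix N. cf fac s N i * Z i \<omega>) + cb fac g N"
    using feq by meson
  show ?thesis unfolding fac_def[symmetric] feq' fin s2 ..
qed



lemma vrec_epoch:
  assumes per: "\<And>j. a (k*n + j) = a j"
  shows "vrec a v0 e (k*n + m) = (\<Prod>l<m. (a l)\<^sup>2) * vrec a v0 e (k*n) + e * vrec a 0 1 m"
proof (induction m)
  case 0 then show ?case by simp
next
  case (Suc m)
  have "vrec a v0 e (k*n + Suc m) = (a (k*n+m))\<^sup>2 * vrec a v0 e (k*n + m) + e"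
    by simp
  then have "vrec a v0 e (k*n + Suc m) = (a m)\<^sup>2 * vrec a v0 e (k*n + m) + e"
    unfolding per .
  then show ?case unfolding Suc.IH by (simp add: algebra_simps)
qed

lemma vrec_closed:
  fixes V :: "nat \<Rightarrow> real"
  assumes rec: "\<And>k. V (Suc k) = P2 * V k + g" and ne: "P2 \<noteq> 1"
  shows "V k = P2^k * (V 0 - g/(1-P2)) + g/(1-P2)"
proof (induction k)
  case 0 then show ?case by simp
next
  case (Suc k)
  have ne': "1 - P2 \<noteq> 0" using ne by simp
  define q where "q = g / (1 - P2)"
  have q: "P2 * q + g = q" using ne' by (simp add: q_def field_simps)
  have "V (Suc k) = P2 * (P2^k * (V 0 - q) + q) + g" unfolding rec Suc q_def ..
  also have "\<dots> = P2^(Suc k) * (V 0 - q) + (P2 * q + g)" by (simp add: algebra_simps)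
  finally show ?case unfolding q by (simp add: q_def)
qed

lemma vrec_nonneg: "0 \<le> v0 \<Longrightarrow> 0 \<le> e \<Longrightarrow> 0 \<le> vrec a v0 e m"
  by (induction m) auto

lemma H_closed: "vrec (\<lambda>_. l) 0 1 m * (1 - l\<^sup>2) = 1 - l^(2*m)"
proof (induction m)
  case 0 then show ?case by simp
next
  case (Suc m)
  have "vrec (\<lambda>_. l) 0 1 (Suc m) * (1 - l\<^sup>2) = l\<^sup>2 * (vrec (\<lambda>_. l) 0 1 m * (1 - l\<^sup>2)) + (1 - l\<^sup>2)"
    by (simp add: algebra_simps)
  also have "\<dots> = 1 - l^(2 * Suc m)" unfolding Suc by (simp add: algebra_simps power_add power_mult_distrib power2_eq_square power_mult)
  finally show ?case .
qed

definition per_fac :: "nat \<Rightarrow> nat \<Rightarrow> real \<Rightarrow> real \<Rightarrow> nat \<Rightarrow> real" where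
  "per_fac n r lh l j = (if j mod n + 1 = r then lh else l)"

lemma per_fac_per: "per_fac n r lh l (k*n + j) = per_fac n r lh l j"
  by (simp add: per_fac_def)

lemma per_fac_prod:
  assumes r: "1 \<le> r" "r \<le> n"
  shows "(\<Prod>j<n. (per_fac n r lh l j)\<^sup>2) = lh\<^sup>2 * l^(2*(n-1))"
proof -
  have rin: "r - 1 \<in> {..<n}" using r by auto
  have "(\<Prod>j<n. (per_fac n r lh l j)\<^sup>2) = (per_fac n r lh l (r-1))\<^sup>2 * (\<Prod>j\<in>{..<n} - {r-1}. (per_fac n r lh l j)\<^sup>2)"
    by (rule prod.remove[OF _ rin]) simp
  also have "(per_fac n r lh l (r-1))\<^sup>2 = lh\<^sup>2" using r by (simp add: per_fac_def)
  also have "(\<Prod>j\<in>{..<n} - {r-1}. (per_fac n r lh l j)\<^sup>2) = (\<Prod>j\<in>{..<n} - {r-1}. l\<^sup>2)"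
    by (rule prod.cong) (auto simp: per_fac_def)
  also have "\<dots> = (l\<^sup>2)^(n-1)" using rin by (simp add: card_Diff_singleton)
  finally show ?thesis by (simp add: power_mult)
qed

lemma G_bound:
  assumes r: "1 \<le> r" "r \<le> n" and l: "0 < l" "l \<le> 1" and lh: "0 \<le> lh" "lh \<le> 1"
  shows "m \<le> n \<Longrightarrow> vrec (per_fac n r lh l) 0 1 m \<le> vrec (\<lambda>_. l) 0 1 m / l\<^sup>2
     \<and> ((m \<le> r - 1 \<or> r = 1) \<longrightarrow> vrec (per_fac n r lh l) 0 1 m \<le> vrec (\<lambda>_. l) 0 1 m)"
proof (induction m)
  case 0 then show ?case by simp
next
  case (Suc m)
  let ?G = "vrec (per_fac n r lh l) 0 1" and ?H = "vrec (\<lambda>_. l) 0 1"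
  have mn: "m < n" using Suc by simp
  have IH: "?G m \<le> ?H m / l\<^sup>2" "(m \<le> r - 1 \<or> r = 1) \<longrightarrow> ?G m \<le> ?H m" using Suc by auto
  have l2: "0 < l\<^sup>2" "l\<^sup>2 \<le> 1" using l by (auto simp: power_le_one)
  have lh2: "lh\<^sup>2 \<le> 1" using lh by (simp add: power_le_one)
  have Hnn: "0 \<le> ?H m" "0 \<le> ?G m" by (auto intro: vrec_nonneg)
  have HS: "?H (Suc m) = l\<^sup>2 * ?H m + 1" by simp
  have H1: "?H m + 1 \<le> ?H (Suc m) / l\<^sup>2"
  proof -
    have "?H (Suc m) / l\<^sup>2 = ?H m + 1 / l\<^sup>2" using l2 by (simp add: field_simps)
    moreover have "1 \<le> 1 / l\<^sup>2" using l2 by simp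
    ultimately show ?thesis by simp
  qed
  have Hle: "?H (Suc m) \<le> ?H (Suc m) / l\<^sup>2"
  proof -
    have "0 \<le> ?H (Suc m)" by (rule vrec_nonneg) auto
    then have "?H (Suc m) * l\<^sup>2 \<le> ?H (Suc m)" using l2 by (simp add: mult_right_le_one_le)
    then show ?thesis using l2 by (simp add: le_divide_eq)
  qed
  show ?case
  proof (cases "m + 1 = r")
    case True
    then have fa: "per_fac n r lh l m = lh" using mn by (simp add: per_fac_def)
    have mr: "m \<le> r - 1" using True by simp
    have G1: "?G (Suc m) = lh\<^sup>2 * ?G m + 1" using fa by simp
    have a1: "lh\<^sup>2 * ?G m \<le> ?G m" using lh2 Hnn by (simp add: mult_left_le_one_le)
    have b1: "?G (Suc m) \<le> ?H (Suc m) / l\<^sup>2" using G1 a1 IH(2) mr H1 by linarith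
    have b2: "r = 1 \<longrightarrow> ?G (Suc m) \<le> ?H (Suc m)" using True G1 by simp
    show ?thesis using b1 b2 True by auto
  next
    case False
    then have fa: "per_fac n r lh l m = l" using mn by (simp add: per_fac_def)
    have G1: "?G (Suc m) = l\<^sup>2 * ?G m + 1" using fa by simp
    have a1: "l\<^sup>2 * ?G m \<le> ?H m" using IH(1) l2 by (simp add: field_simps)
    have b1: "?G (Suc m) \<le> ?H (Suc m) / l\<^sup>2" using G1 a1 H1 by linarith
    have b2: "(Suc m \<le> r - 1 \<or> r = 1) \<longrightarrow> ?G (Suc m) \<le> ?H (Suc m)"
    proof
      assume "Suc m \<le> r - 1 \<or> r = 1"
      then have "m \<le> r - 1 \<or> r = 1" by auto
      then have "?G m \<le> ?H m" using IH(2) by blast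
      then have "l\<^sup>2 * ?G m \<le> l\<^sup>2 * ?H m" using l2 by (simp add: mult_left_mono)
      then show "?G (Suc m) \<le> ?H (Suc m)" using G1 HS by linarith
    qed
    show ?thesis using b1 b2 by blast
  qed
qed



lemma bern_ineq: fixes Y W V :: real
  assumes "0 \<le> Y" "Y \<le> 1" "0 \<le> W" "W \<le> 1" "0 \<le> V" "V \<le> 1"
  shows "0 \<le> (2 - V/4 - 9*V*W/16) * (2 * (1 + Y/3 - 2*Y*W/3 - 4*(Y*W/3)*(Y*W*V/6) + 2*(Y*W*V/6) + 4*(Y*W*V/6)*(Y*W*V/6)) * (1 - 2*(Y*W*V/6) + 3/2*(Y*W*V/6)*W) - 1 - 24/11*(1-W)*(Y*W/3)) - 3/2*W*(V/2)*(1-Y*W*V/6)"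
proof -
  have eq: "(2 - V/4 - 9*V*W/16) * (2 * (1 + Y/3 - 2*Y*W/3 - 4*(Y*W/3)*(Y*W*V/6) + 2*(Y*W*V/6) + 4*(Y*W*V/6)*(Y*W*V/6)) * (1 - 2*(Y*W*V/6) + 3/2*(Y*W*V/6)*W) - 1 - 24/11*(1-W)*(Y*W/3)) - 3/2*W*(V/2)*(1-Y*W*V/6) =
  (2::real) * (1-Y)^3 * (1-W)^5 * (1-V)^4
  + (31/4::real) * (1-Y)^3 * (1-W)^5 * V * (1-V)^3
  + (45/4::real) * (1-Y)^3 * (1-W)^5 * V^2 * (1-V)^2
  + (29/4::real) * (1-Y)^3 * (1-W)^5 * V^3 * (1-V)
  + (7/4::real) * (1-Y)^3 * (1-W)^5 * V^4
  + (10::real) * (1-Y)^3 * W * (1-W)^4 * (1-V)^4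
  + (599/16::real) * (1-Y)^3 * W * (1-W)^4 * V * (1-V)^3
  + (837/16::real) * (1-Y)^3 * W * (1-W)^4 * V^2 * (1-V)^2
  + (517/16::real) * (1-Y)^3 * W * (1-W)^4 * V^3 * (1-V)
  + (119/16::real) * (1-Y)^3 * W * (1-W)^4 * V^4
  + (20::real) * (1-Y)^3 * W^2 * (1-W)^3 * (1-V)^4
  + (289/4::real) * (1-Y)^3 * W^2 * (1-W)^3 * V * (1-V)^3
  + (387/4::real) * (1-Y)^3 * W^2 * (1-W)^3 * V^2 * (1-V)^2
  + (227/4::real) * (1-Y)^3 * W^2 * (1-W)^3 * V^3 * (1-V)
  + (49/4::real) * (1-Y)^3 * W^2 * (1-W)^3 * V^4
  + (20::real) * (1-Y)^3 * W^3 * (1-W)^2 * (1-V)^4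
  + (557/8::real) * (1-Y)^3 * W^3 * (1-W)^2 * V * (1-V)^3
  + (711/8::real) * (1-Y)^3 * W^3 * (1-W)^2 * V^2 * (1-V)^2
  + (391/8::real) * (1-Y)^3 * W^3 * (1-W)^2 * V^3 * (1-V)
  + (77/8::real) * (1-Y)^3 * W^3 * (1-W)^2 * V^4
  + (10::real) * (1-Y)^3 * W^4 * (1-W) * (1-V)^4
  + (67/2::real) * (1-Y)^3 * W^4 * (1-W) * V * (1-V)^3
  + (81/2::real) * (1-Y)^3 * W^4 * (1-W) * V^2 * (1-V)^2
  + (41/2::real) * (1-Y)^3 * W^4 * (1-W) * V^3 * (1-V)
  + (7/2::real) * (1-Y)^3 * W^4 * (1-W) * V^4
  + (2::real) * (1-Y)^3 * W^5 * (1-V)^4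
  + (103/16::real) * (1-Y)^3 * W^5 * V * (1-V)^3
  + (117/16::real) * (1-Y)^3 * W^5 * V^2 * (1-V)^2
  + (53/16::real) * (1-Y)^3 * W^5 * V^3 * (1-V)
  + (7/16::real) * (1-Y)^3 * W^5 * V^4
  + (22/3::real) * Y * (1-Y)^2 * (1-W)^5 * (1-V)^4
  + (341/12::real) * Y * (1-Y)^2 * (1-W)^5 * V * (1-V)^3
  + (165/4::real) * Y * (1-Y)^2 * (1-W)^5 * V^2 * (1-V)^2
  + (319/12::real) * Y * (1-Y)^2 * (1-W)^5 * V^3 * (1-V)
  + (77/12::real) * Y * (1-Y)^2 * (1-W)^5 * V^4
  + (358/11::real) * Y * (1-Y)^2 * W * (1-W)^4 * (1-V)^4
  + (21437/176::real) * Y * (1-Y)^2 * W * (1-W)^4 * V * (1-V)^3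
  + (29943/176::real) * Y * (1-Y)^2 * W * (1-W)^4 * V^2 * (1-V)^2
  + (18487/176::real) * Y * (1-Y)^2 * W * (1-W)^4 * V^3 * (1-V)
  + (4253/176::real) * Y * (1-Y)^2 * W * (1-W)^4 * V^4
  + (1924/33::real) * Y * (1-Y)^2 * W^2 * (1-W)^3 * (1-V)^4
  + (1265/6::real) * Y * (1-Y)^2 * W^2 * (1-W)^3 * V * (1-V)^3
  + (6219/22::real) * Y * (1-Y)^2 * W^2 * (1-W)^3 * V^2 * (1-V)^2
  + (10961/66::real) * Y * (1-Y)^2 * W^2 * (1-W)^3 * V^3 * (1-V)
  + (2371/66::real) * Y * (1-Y)^2 * W^2 * (1-W)^3 * V^4
  + (1748/33::real) * Y * (1-Y)^2 * W^3 * (1-W)^2 * (1-V)^4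
  + (48959/264::real) * Y * (1-Y)^2 * W^3 * (1-W)^2 * V * (1-V)^3
  + (83865/352::real) * Y * (1-Y)^2 * W^3 * (1-W)^2 * V^2 * (1-V)^2
  + (69713/528::real) * Y * (1-Y)^2 * W^3 * (1-W)^2 * V^3 * (1-V)
  + (2521/96::real) * Y * (1-Y)^2 * W^3 * (1-W)^2 * V^4
  + (270/11::real) * Y * (1-Y)^2 * W^4 * (1-W) * (1-V)^4
  + (3675/44::real) * Y * (1-Y)^2 * W^4 * (1-W) * V * (1-V)^3
  + (18081/176::real) * Y * (1-Y)^2 * W^4 * (1-W) * V^2 * (1-V)^2
  + (4671/88::real) * Y * (1-Y)^2 * W^4 * (1-W) * V^3 * (1-V)
  + (1641/176::real) * Y * (1-Y)^2 * W^4 * (1-W) * V^4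
  + (14/3::real) * Y * (1-Y)^2 * W^5 * (1-V)^4
  + (745/48::real) * Y * (1-Y)^2 * W^5 * V * (1-V)^3
  + (585/32::real) * Y * (1-Y)^2 * W^5 * V^2 * (1-V)^2
  + (26/3::real) * Y * (1-Y)^2 * W^5 * V^3 * (1-V)
  + (119/96::real) * Y * (1-Y)^2 * W^5 * V^4
  + (26/3::real) * Y^2 * (1-Y) * (1-W)^5 * (1-V)^4
  + (403/12::real) * Y^2 * (1-Y) * (1-W)^5 * V * (1-V)^3
  + (195/4::real) * Y^2 * (1-Y) * (1-W)^5 * V^2 * (1-V)^2
  + (377/12::real) * Y^2 * (1-Y) * (1-W)^5 * V^3 * (1-V)
  + (91/12::real) * Y^2 * (1-Y) * (1-W)^5 * V^4
  + (386/11::real) * Y^2 * (1-Y) * W * (1-W)^4 * (1-V)^4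
  + (207259/1584::real) * Y^2 * (1-Y) * W * (1-W)^4 * V * (1-V)^3
  + (288361/1584::real) * Y^2 * (1-Y) * W * (1-W)^4 * V^2 * (1-V)^2
  + (177281/1584::real) * Y^2 * (1-Y) * W * (1-W)^4 * V^3 * (1-V)
  + (40595/1584::real) * Y^2 * (1-Y) * W * (1-W)^4 * V^4
  + (1868/33::real) * Y^2 * (1-Y) * W^2 * (1-W)^3 * (1-V)^4
  + (7325/36::real) * Y^2 * (1-Y) * W^2 * (1-W)^3 * V * (1-V)^3
  + (53675/198::real) * Y^2 * (1-Y) * W^2 * (1-W)^3 * V^2 * (1-V)^2
  + (62639/396::real) * Y^2 * (1-Y) * W^2 * (1-W)^3 * V^3 * (1-V)
  + (3362/99::real) * Y^2 * (1-Y) * W^2 * (1-W)^3 * V^4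
  + (1516/33::real) * Y^2 * (1-Y) * W^3 * (1-W)^2 * (1-V)^4
  + (14053/88::real) * Y^2 * (1-Y) * W^3 * (1-W)^2 * V * (1-V)^3
  + (71733/352::real) * Y^2 * (1-Y) * W^3 * (1-W)^2 * V^2 * (1-V)^2
  + (19749/176::real) * Y^2 * (1-Y) * W^3 * (1-W)^2 * V^3 * (1-V)
  + (2129/96::real) * Y^2 * (1-Y) * W^3 * (1-W)^2 * V^4
  + (210/11::real) * Y^2 * (1-Y) * W^4 * (1-W) * (1-V)^4
  + (6379/99::real) * Y^2 * (1-Y) * W^4 * (1-W) * V * (1-V)^3
  + (62519/792::real) * Y^2 * (1-Y) * W^4 * (1-W) * V^2 * (1-V)^2
  + (129127/3168::real) * Y^2 * (1-Y) * W^4 * (1-W) * V^3 * (1-V)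
  + (22699/3168::real) * Y^2 * (1-Y) * W^4 * (1-W) * V^4
  + (10/3::real) * Y^2 * (1-Y) * W^5 * (1-V)^4
  + (1577/144::real) * Y^2 * (1-Y) * W^5 * V * (1-V)^3
  + (3727/288::real) * Y^2 * (1-Y) * W^5 * V^2 * (1-V)^2
  + (1793/288::real) * Y^2 * (1-Y) * W^5 * V^3 * (1-V)
  + (65/72::real) * Y^2 * (1-Y) * W^5 * V^4
  + (10/3::real) * Y^3 * (1-W)^5 * (1-V)^4
  + (155/12::real) * Y^3 * (1-W)^5 * V * (1-V)^3
  + (75/4::real) * Y^3 * (1-W)^5 * V^2 * (1-V)^2
  + (145/12::real) * Y^3 * (1-W)^5 * V^3 * (1-V)
  + (35/12::real) * Y^3 * (1-W)^5 * V^4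
  + (138/11::real) * Y^3 * W * (1-W)^4 * (1-V)^4
  + (73627/1584::real) * Y^3 * W * (1-W)^4 * V * (1-V)^3
  + (101737/1584::real) * Y^3 * W * (1-W)^4 * V^2 * (1-V)^2
  + (62081/1584::real) * Y^3 * W * (1-W)^4 * V^3 * (1-V)
  + (14099/1584::real) * Y^3 * W * (1-W)^4 * V^4
  + (604/33::real) * Y^3 * W^2 * (1-W)^3 * (1-V)^4
  + (584/9::real) * Y^3 * W^2 * (1-W)^3 * V * (1-V)^3
  + (33721/396::real) * Y^3 * W^2 * (1-W)^3 * V^2 * (1-V)^2
  + (9673/198::real) * Y^3 * W^2 * (1-W)^3 * V^3 * (1-V)
  + (4073/396::real) * Y^3 * W^2 * (1-W)^3 * V^4
  + (428/33::real) * Y^3 * W^3 * (1-W)^2 * (1-V)^4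
  + (11581/264::real) * Y^3 * W^3 * (1-W)^2 * V * (1-V)^3
  + (32495/594::real) * Y^3 * W^3 * (1-W)^2 * V^2 * (1-V)^2
  + (34999/1188::real) * Y^3 * W^3 * (1-W)^2 * V^3 * (1-V)
  + (1225/216::real) * Y^3 * W^3 * (1-W)^2 * V^4
  + (50/11::real) * Y^3 * W^4 * (1-W) * (1-V)^4
  + (5707/396::real) * Y^3 * W^4 * (1-W) * V * (1-V)^3
  + (81143/4752::real) * Y^3 * W^4 * (1-W) * V^2 * (1-V)^2
  + (81793/9504::real) * Y^3 * W^4 * (1-W) * V^3 * (1-V)
  + (13891/9504::real) * Y^3 * W^4 * (1-W) * V^4
  + (2/3::real) * Y^3 * W^5 * (1-V)^4
  + (269/144::real) * Y^3 * W^5 * V * (1-V)^3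
  + (221/108::real) * Y^3 * W^5 * V^2 * (1-V)^2
  + (823/864::real) * Y^3 * W^5 * V^3 * (1-V)
  + (53/432::real) * Y^3 * W^5 * V^4"
    by algebra
  have y: "0 \<le> 1 - Y" and w: "0 \<le> 1 - W" and v: "0 \<le> 1 - V" using assms by auto
  have "0 \<le> (2::real) * (1-Y)^3 * (1-W)^5 * (1-V)^4
  + (31/4::real) * (1-Y)^3 * (1-W)^5 * V * (1-V)^3
  + (45/4::real) * (1-Y)^3 * (1-W)^5 * V^2 * (1-V)^2
  + (29/4::real) * (1-Y)^3 * (1-W)^5 * V^3 * (1-V)
  + (7/4::real) * (1-Y)^3 * (1-W)^5 * V^4
  + (10::real) * (1-Y)^3 * W * (1-W)^4 * (1-V)^4
  + (599/16::real) * (1-Y)^3 * W * (1-W)^4 * V * (1-V)^3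
  + (837/16::real) * (1-Y)^3 * W * (1-W)^4 * V^2 * (1-V)^2
  + (517/16::real) * (1-Y)^3 * W * (1-W)^4 * V^3 * (1-V)
  + (119/16::real) * (1-Y)^3 * W * (1-W)^4 * V^4
  + (20::real) * (1-Y)^3 * W^2 * (1-W)^3 * (1-V)^4
  + (289/4::real) * (1-Y)^3 * W^2 * (1-W)^3 * V * (1-V)^3
  + (387/4::real) * (1-Y)^3 * W^2 * (1-W)^3 * V^2 * (1-V)^2
  + (227/4::real) * (1-Y)^3 * W^2 * (1-W)^3 * V^3 * (1-V)
  + (49/4::real) * (1-Y)^3 * W^2 * (1-W)^3 * V^4
  + (20::real) * (1-Y)^3 * W^3 * (1-W)^2 * (1-V)^4
  + (557/8::real) * (1-Y)^3 * W^3 * (1-W)^2 * V * (1-V)^3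
  + (711/8::real) * (1-Y)^3 * W^3 * (1-W)^2 * V^2 * (1-V)^2
  + (391/8::real) * (1-Y)^3 * W^3 * (1-W)^2 * V^3 * (1-V)
  + (77/8::real) * (1-Y)^3 * W^3 * (1-W)^2 * V^4
  + (10::real) * (1-Y)^3 * W^4 * (1-W) * (1-V)^4
  + (67/2::real) * (1-Y)^3 * W^4 * (1-W) * V * (1-V)^3
  + (81/2::real) * (1-Y)^3 * W^4 * (1-W) * V^2 * (1-V)^2
  + (41/2::real) * (1-Y)^3 * W^4 * (1-W) * V^3 * (1-V)
  + (7/2::real) * (1-Y)^3 * W^4 * (1-W) * V^4
  + (2::real) * (1-Y)^3 * W^5 * (1-V)^4
  + (103/16::real) * (1-Y)^3 * W^5 * V * (1-V)^3
  + (117/16::real) * (1-Y)^3 * W^5 * V^2 * (1-V)^2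
  + (53/16::real) * (1-Y)^3 * W^5 * V^3 * (1-V)
  + (7/16::real) * (1-Y)^3 * W^5 * V^4
  + (22/3::real) * Y * (1-Y)^2 * (1-W)^5 * (1-V)^4
  + (341/12::real) * Y * (1-Y)^2 * (1-W)^5 * V * (1-V)^3
  + (165/4::real) * Y * (1-Y)^2 * (1-W)^5 * V^2 * (1-V)^2
  + (319/12::real) * Y * (1-Y)^2 * (1-W)^5 * V^3 * (1-V)
  + (77/12::real) * Y * (1-Y)^2 * (1-W)^5 * V^4
  + (358/11::real) * Y * (1-Y)^2 * W * (1-W)^4 * (1-V)^4
  + (21437/176::real) * Y * (1-Y)^2 * W * (1-W)^4 * V * (1-V)^3
  + (29943/176::real) * Y * (1-Y)^2 * W * (1-W)^4 * V^2 * (1-V)^2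
  + (18487/176::real) * Y * (1-Y)^2 * W * (1-W)^4 * V^3 * (1-V)
  + (4253/176::real) * Y * (1-Y)^2 * W * (1-W)^4 * V^4
  + (1924/33::real) * Y * (1-Y)^2 * W^2 * (1-W)^3 * (1-V)^4
  + (1265/6::real) * Y * (1-Y)^2 * W^2 * (1-W)^3 * V * (1-V)^3
  + (6219/22::real) * Y * (1-Y)^2 * W^2 * (1-W)^3 * V^2 * (1-V)^2
  + (10961/66::real) * Y * (1-Y)^2 * W^2 * (1-W)^3 * V^3 * (1-V)
  + (2371/66::real) * Y * (1-Y)^2 * W^2 * (1-W)^3 * V^4
  + (1748/33::real) * Y * (1-Y)^2 * W^3 * (1-W)^2 * (1-V)^4
  + (48959/264::real) * Y * (1-Y)^2 * W^3 * (1-W)^2 * V * (1-V)^3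
  + (83865/352::real) * Y * (1-Y)^2 * W^3 * (1-W)^2 * V^2 * (1-V)^2
  + (69713/528::real) * Y * (1-Y)^2 * W^3 * (1-W)^2 * V^3 * (1-V)
  + (2521/96::real) * Y * (1-Y)^2 * W^3 * (1-W)^2 * V^4
  + (270/11::real) * Y * (1-Y)^2 * W^4 * (1-W) * (1-V)^4
  + (3675/44::real) * Y * (1-Y)^2 * W^4 * (1-W) * V * (1-V)^3
  + (18081/176::real) * Y * (1-Y)^2 * W^4 * (1-W) * V^2 * (1-V)^2
  + (4671/88::real) * Y * (1-Y)^2 * W^4 * (1-W) * V^3 * (1-V)
  + (1641/176::real) * Y * (1-Y)^2 * W^4 * (1-W) * V^4
  + (14/3::real) * Y * (1-Y)^2 * W^5 * (1-V)^4
  + (745/48::real) * Y * (1-Y)^2 * W^5 * V * (1-V)^3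
  + (585/32::real) * Y * (1-Y)^2 * W^5 * V^2 * (1-V)^2
  + (26/3::real) * Y * (1-Y)^2 * W^5 * V^3 * (1-V)
  + (119/96::real) * Y * (1-Y)^2 * W^5 * V^4
  + (26/3::real) * Y^2 * (1-Y) * (1-W)^5 * (1-V)^4
  + (403/12::real) * Y^2 * (1-Y) * (1-W)^5 * V * (1-V)^3
  + (195/4::real) * Y^2 * (1-Y) * (1-W)^5 * V^2 * (1-V)^2
  + (377/12::real) * Y^2 * (1-Y) * (1-W)^5 * V^3 * (1-V)
  + (91/12::real) * Y^2 * (1-Y) * (1-W)^5 * V^4
  + (386/11::real) * Y^2 * (1-Y) * W * (1-W)^4 * (1-V)^4
  + (207259/1584::real) * Y^2 * (1-Y) * W * (1-W)^4 * V * (1-V)^3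
  + (288361/1584::real) * Y^2 * (1-Y) * W * (1-W)^4 * V^2 * (1-V)^2
  + (177281/1584::real) * Y^2 * (1-Y) * W * (1-W)^4 * V^3 * (1-V)
  + (40595/1584::real) * Y^2 * (1-Y) * W * (1-W)^4 * V^4
  + (1868/33::real) * Y^2 * (1-Y) * W^2 * (1-W)^3 * (1-V)^4
  + (7325/36::real) * Y^2 * (1-Y) * W^2 * (1-W)^3 * V * (1-V)^3
  + (53675/198::real) * Y^2 * (1-Y) * W^2 * (1-W)^3 * V^2 * (1-V)^2
  + (62639/396::real) * Y^2 * (1-Y) * W^2 * (1-W)^3 * V^3 * (1-V)
  + (3362/99::real) * Y^2 * (1-Y) * W^2 * (1-W)^3 * V^4
  + (1516/33::real) * Y^2 * (1-Y) * W^3 * (1-W)^2 * (1-V)^4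
  + (14053/88::real) * Y^2 * (1-Y) * W^3 * (1-W)^2 * V * (1-V)^3
  + (71733/352::real) * Y^2 * (1-Y) * W^3 * (1-W)^2 * V^2 * (1-V)^2
  + (19749/176::real) * Y^2 * (1-Y) * W^3 * (1-W)^2 * V^3 * (1-V)
  + (2129/96::real) * Y^2 * (1-Y) * W^3 * (1-W)^2 * V^4
  + (210/11::real) * Y^2 * (1-Y) * W^4 * (1-W) * (1-V)^4
  + (6379/99::real) * Y^2 * (1-Y) * W^4 * (1-W) * V * (1-V)^3
  + (62519/792::real) * Y^2 * (1-Y) * W^4 * (1-W) * V^2 * (1-V)^2
  + (129127/3168::real) * Y^2 * (1-Y) * W^4 * (1-W) * V^3 * (1-V)
  + (22699/3168::real) * Y^2 * (1-Y) * W^4 * (1-W) * V^4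
  + (10/3::real) * Y^2 * (1-Y) * W^5 * (1-V)^4
  + (1577/144::real) * Y^2 * (1-Y) * W^5 * V * (1-V)^3
  + (3727/288::real) * Y^2 * (1-Y) * W^5 * V^2 * (1-V)^2
  + (1793/288::real) * Y^2 * (1-Y) * W^5 * V^3 * (1-V)
  + (65/72::real) * Y^2 * (1-Y) * W^5 * V^4
  + (10/3::real) * Y^3 * (1-W)^5 * (1-V)^4
  + (155/12::real) * Y^3 * (1-W)^5 * V * (1-V)^3
  + (75/4::real) * Y^3 * (1-W)^5 * V^2 * (1-V)^2
  + (145/12::real) * Y^3 * (1-W)^5 * V^3 * (1-V)
  + (35/12::real) * Y^3 * (1-W)^5 * V^4
  + (138/11::real) * Y^3 * W * (1-W)^4 * (1-V)^4
  + (73627/1584::real) * Y^3 * W * (1-W)^4 * V * (1-V)^3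
  + (101737/1584::real) * Y^3 * W * (1-W)^4 * V^2 * (1-V)^2
  + (62081/1584::real) * Y^3 * W * (1-W)^4 * V^3 * (1-V)
  + (14099/1584::real) * Y^3 * W * (1-W)^4 * V^4
  + (604/33::real) * Y^3 * W^2 * (1-W)^3 * (1-V)^4
  + (584/9::real) * Y^3 * W^2 * (1-W)^3 * V * (1-V)^3
  + (33721/396::real) * Y^3 * W^2 * (1-W)^3 * V^2 * (1-V)^2
  + (9673/198::real) * Y^3 * W^2 * (1-W)^3 * V^3 * (1-V)
  + (4073/396::real) * Y^3 * W^2 * (1-W)^3 * V^4
  + (428/33::real) * Y^3 * W^3 * (1-W)^2 * (1-V)^4
  + (11581/264::real) * Y^3 * W^3 * (1-W)^2 * V * (1-V)^3
  + (32495/594::real) * Y^3 * W^3 * (1-W)^2 * V^2 * (1-V)^2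
  + (34999/1188::real) * Y^3 * W^3 * (1-W)^2 * V^3 * (1-V)
  + (1225/216::real) * Y^3 * W^3 * (1-W)^2 * V^4
  + (50/11::real) * Y^3 * W^4 * (1-W) * (1-V)^4
  + (5707/396::real) * Y^3 * W^4 * (1-W) * V * (1-V)^3
  + (81143/4752::real) * Y^3 * W^4 * (1-W) * V^2 * (1-V)^2
  + (81793/9504::real) * Y^3 * W^4 * (1-W) * V^3 * (1-V)
  + (13891/9504::real) * Y^3 * W^4 * (1-W) * V^4
  + (2/3::real) * Y^3 * W^5 * (1-V)^4
  + (269/144::real) * Y^3 * W^5 * V * (1-V)^3
  + (221/108::real) * Y^3 * W^5 * V^2 * (1-V)^2
  + (823/864::real) * Y^3 * W^5 * V^3 * (1-V)
  + (53/432::real) * Y^3 * W^5 * V^4"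
    using assms y w v by (intro add_nonneg_nonneg mult_nonneg_nonneg zero_le_power; simp)
  then show ?thesis unfolding eq .
qed

lemma poly_ineq: fixes u w m :: real
  assumes "0 \<le> u" "u \<le> 1/3" "0 \<le> w" "w \<le> 1" "0 \<le> m" "m \<le> 1/2"
  shows "1 + 3/2*w*m*(1-u*w*m) / (2 - m/2 - 9*m*w/8) + 24/11*(1-w)*u*w
     \<le> 2 * (1 + u - 2*u*w - 4*u*w*(u*w*m) + 2*(u*w*m) + 4*(u*w*m)*(u*w*m)) * (1 - 2*(u*w*m) + 3/2*(u*w*m)*w)"
proof -
  have b: "0 \<le> (2 - (2*m)/4 - 9*(2*m)*w/16) * (2 * (1 + (3*u)/3 - 2*(3*u)*w/3 - 4*((3*u)*w/3)*((3*u)*w*(2*m)/6) + 2*((3*u)*w*(2*m)/6) + 4*((3*u)*w*(2*m)/6)*((3*u)*w*(2*m)/6)) * (1 - 2*((3*u)*w*(2*m)/6) + 3/2*((3*u)*w*(2*m)/6)*w) - 1 - 24/11*(1-w)*((3*u)*w/3)) - 3/2*w*((2*m)/2)*(1-(3*u)*w*(2*m)/6)"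
    by (rule bern_ineq) (use assms in auto)
  have den: "0 < 2 - m/2 - 9*m*w/8"
  proof -
    have "m*w \<le> 1/2" using assms mult_mono[of m "1/2" w 1] by auto
    then show ?thesis using assms by auto
  qed
  define X where "X = 3/2*w*m*(1-u*w*m)"
  define D where "D = 2 - m/2 - 9*m*w/8"
  define R where "R = 2 * (1 + u - 2*u*w - 4*u*w*(u*w*m) + 2*(u*w*m) + 4*(u*w*m)*(u*w*m)) * (1 - 2*(u*w*m) + 3/2*(u*w*m)*w) - 1 - 24/11*(1-w)*u*w"
  have "(2 - (2*m)/4 - 9*(2*m)*w/16) * (2 * (1 + (3*u)/3 - 2*(3*u)*w/3 - 4*((3*u)*w/3)*((3*u)*w*(2*m)/6) + 2*((3*u)*w*(2*m)/6) + 4*((3*u)*w*(2*m)/6)*((3*u)*w*(2*m)/6)) * (1 - 2*((3*u)*w*(2*m)/6) + 3/2*((3*u)*w*(2*m)/6)*w) - 1 - 24/11*(1-w)*((3*u)*w/3)) - 3/2*w*((2*m)/2)*(1-(3*u)*w*(2*m)/6) = D * R - X"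
    unfolding X_def D_def R_def by algebra
  with b have "X \<le> D * R" by simp
  then have "X / D \<le> R" using den unfolding D_def by (simp add: pos_divide_le_eq mult.commute)
  then show ?thesis unfolding X_def D_def R_def by linarith
qed



lemma pow_bern_up: "0 \<le> (a::real) \<Longrightarrow> a \<le> 1 \<Longrightarrow> (1-a)^j * (1 + real j * a) \<le> 1"
proof (induction j)
  case 0 then show ?case by simp
next
  case (Suc j)
  have "(1-a)^(Suc j) * (1 + real (Suc j) * a) = (1-a)^j * ((1 + real j * a) - a * a * (1 + real j))"
    by (simp add: algebra_simps)
  also have "\<dots> \<le> (1-a)^j * (1 + real j * a)"
    using Suc.prems by (intro mult_left_mono) auto
  also have "\<dots> \<le> 1" using Suc by simp
  finally show ?case .
qed

lemma frac_aux: "(a::real) \<noteq> 0 \<Longrightarrow> 2 - a \<noteq> 0 \<Longrightarrow> (Z / (a*(2-a))) * (a*(2-a) + 2*W1*a*Q) = Z + Z*(2*W1/(2-a))*Q"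
  by (simp add: field_simps)

lemma core:
  fixes \<alpha> t A \<eta> l lh P2 D :: real and n :: nat
  assumes ap: "\<alpha> > 0" and tp: "t > 3" and n2: "n \<ge> 2"
    and A: "A = \<alpha> + real n * t" and eta: "\<eta> = 2 / A\<^sup>2" and l: "l = 1 - 1/A"
    and lh: "lh = 1 - (\<alpha> + real n * t / 4) / A\<^sup>2"
    and P2: "P2 = lh\<^sup>2 * l^(2*(n-1))" and D: "D = \<alpha> * \<eta> + 1 - l\<^sup>2"
  shows "(1 - l^(2*n)) / (1 - l\<^sup>2) * (D - P2 * \<alpha> * \<eta>) \<le> 2 * exp (1/t) * P2 * (1 - P2)"
proof -
  define a where "a = 1/A"
  define w where "w = real n * t / A"
  define u where "u = 1/t"
  define m where "m = 1 / real n"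
  define g where "g = 1 - 3*w/4"
  define k where "k = 2 * real n - 2"
  define q where "q = (1-a)^(2*n-2)"
  define z where "z = (1-a)^(2*n)"
  have hn: "real n \<ge> 2" using n2 by simp
  have nt: "real n * t > 6"
  proof -
    have "2 * t \<le> real n * t" using hn tp by (intro mult_right_mono) auto
    then show ?thesis using tp by linarith
  qed
  have Apos: "A > 6" using A ap nt by linarith
  have a0: "0 < a" and a6: "a < 1/6" using Apos by (auto simp: a_def field_simps)
  have w0: "0 < w" and w1: "w < 1" using Apos nt ap A by (auto simp: w_def field_simps)
  have u0: "0 < u" and u3: "u < 1/3" using tp by (auto simp: u_def field_simps)
  have m0: "0 < m" and m2: "m \<le> 1/2" using hn by (auto simp: m_def field_simps)
  have tne: "t \<noteq> 0" and nne: "real n \<noteq> 0" and Ane: "A \<noteq> 0" using tp hn Apos by auto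
  have ha: "u * w * m = a" unfolding u_def w_def m_def a_def using tne nne Ane by (simp add: field_simps)
  have hna: "real n * a = u * w" unfolding u_def w_def a_def using tne nne Ane by (simp add: field_simps)
  have hka: "k * a = 2 * (u * w) - 2 * a" unfolding k_def using hna by (simp add: algebra_simps)
  have aw: "\<alpha> * a = 1 - w" unfolding a_def w_def using A Ane by (simp add: field_simps)
  have aeta: "\<alpha> * \<eta> = 2 * (1 - w) * a"
  proof -
    have "\<alpha> * \<eta> = 2 * (\<alpha> * a) * a" unfolding eta a_def by (simp add: power2_eq_square field_simps)
    then show ?thesis using aw by simp
  qed
  have hl: "l = 1 - a" unfolding l a_def ..
  have hlh: "lh = 1 - a * g"
  proof -
    have "(\<alpha> + real n * t / 4) / A\<^sup>2 = a * (\<alpha> * a + (real n * t / A) / 4)"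
      unfolding a_def using Ane by (simp add: power2_eq_square field_simps)
    then show ?thesis unfolding lh g_def aw w_def[symmetric] by (simp add: algebra_simps)
  qed
  have g14: "1/4 \<le> g" "g \<le> 1" using w0 w1 by (auto simp: g_def)
  have hq: "l^(2*(n-1)) = q" unfolding q_def hl by (simp add: right_diff_distrib')
  have hz: "l^(2*n) = (1-a)\<^sup>2 * q"
  proof -
    have "2*n = 2 + (2*n-2)" using n2 by simp
    then have "(1-a)^(2*n) = (1-a)^2 * (1-a)^(2*n-2)" by (metis power_add)
    then show ?thesis unfolding hl q_def by simp
  qed
  have hP2: "P2 = lh\<^sup>2 * q" unfolding P2 hq ..
  have q0: "0 < q" and q1: "q \<le> 1" using a0 a6 unfolding q_def by (auto intro: power_le_one)
  have lh0: "0 < lh" and lh1: "lh \<le> 1"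
  proof -
    have "a * g \<le> 1/6" using a0 a6 g14 mult_mono[of a "1/6" g 1] by auto
    moreover have "0 \<le> a * g" using a0 g14 by simp
    ultimately show "0 < lh" "lh \<le> 1" unfolding hlh by auto
  qed
  have lh2: "lh\<^sup>2 \<le> 1" using lh0 lh1 by (simp add: power_le_one)
  have P20: "0 < P2" using lh0 q0 unfolding hP2 by simp
  have P21: "P2 \<le> 1" using lh2 q1 q0 lh0 unfolding hP2 by (simp add: mult_le_one)
  define c where "c = 2*g - a*g\<^sup>2"
  have hlh2: "lh\<^sup>2 = 1 - c * a" unfolding hlh c_def by (simp add: power2_eq_square algebra_simps)
  have z1: "z = (1-a)\<^sup>2 * q" using hz unfolding z_def hl .
  have l2: "1 - l\<^sup>2 = a * (2 - a)" unfolding hl by (simp add: power2_eq_square algebra_simps)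
  have lhs_eq: "(1 - l^(2*n)) / (1 - l\<^sup>2) * (D - P2 * \<alpha> * \<eta>)
      = (1 - z) + (1 - z) * (2 * (1 - w) / (2 - a)) * (1 - P2)"
  proof -
    have pe: "P2 * \<alpha> * \<eta> = P2 * (2 * (1 - w) * a)" using aeta by (simp add: mult.assoc)
    have dd: "D - P2 * \<alpha> * \<eta> = a * (2 - a) + 2 * (1 - w) * a * (1 - P2)"
      unfolding D pe aeta l2[symmetric] by (simp add: algebra_simps)
    have lz: "l^(2*n) = z" unfolding z_def hl ..
    have fa: "((1-z) / (a*(2-a))) * (a*(2-a) + 2*(1-w)*a*(1-P2)) = (1-z) + (1-z)*(2*(1-w)/(2-a))*(1-P2)"
      by (rule frac_aux) (use a0 a6 in auto)
    show ?thesis unfolding l2 lz dd by (rule fa)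
  qed
  define K1 where "K1 = k + c * (1 - a)"
  define K2 where "K2 = k + (1 - a) * (2 - a)"
  define K0 where "K0 = k + 3/2 - 9*w/8"
  have k2: "k \<ge> 2" unfolding k_def using hn by simp
  have K00: "K0 > 0" unfolding K0_def using k2 w1 by simp
  have c1: "c * (1 - a) \<ge> 3/2 - 9*w/8"
  proof -
    have "c \<ge> g * (2 - a)" unfolding c_def using g14 a0 mult_left_mono[of g 1 "a*g"]
      by (simp add: power2_eq_square algebra_simps)
    moreover have "(2 - a) * (1 - a) \<ge> 3/2"
    proof -
      have "(2 - a) * (1 - a) = 2 - 3*a + a*a" by (simp add: algebra_simps)
      moreover have "0 \<le> a*a" by simp
      ultimately show ?thesis using a6 by linarith
    qed
    ultimately have "c * (1 - a) \<ge> g * (2 - a) * (1 - a)" using a6 by (intro mult_right_mono) auto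
    moreover have "g * (2 - a) * (1 - a) \<ge> g * (3/2)"
    proof -
      have "g * (3/2) \<le> g * ((2 - a) * (1 - a))" using \<open>(2 - a) * (1 - a) \<ge> 3/2\<close> g14
        by (intro mult_left_mono) auto
      then show ?thesis by (simp add: mult.assoc)
    qed
    ultimately show ?thesis unfolding g_def by (simp add: algebra_simps)
  qed
  have K10: "K1 \<ge> K0" unfolding K1_def K0_def using c1 by simp
  have cc0: "2 - a - c \<ge> 0"
  proof -
    have "2 - a - c = (1 - g) * (2 - a * (1 + g))" unfolding c_def by (simp add: power2_eq_square algebra_simps)
    moreover have "a * (1 + g) \<le> 2" using a0 a6 g14 mult_mono[of a "1/6" "1+g" 2] by auto
    ultimately show ?thesis using g14 by simp
  qed
  have cc1: "2 - a - c \<le> 3/2 * w"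
  proof -
    have "2 - a - c = 2 * (1 - g) - a * (1 - g\<^sup>2)" unfolding c_def by (simp add: power2_eq_square algebra_simps)
    moreover have "0 \<le> a * (1 - g\<^sup>2)" using a0 g14 by (simp add: power_le_one)
    ultimately show ?thesis unfolding g_def by simp
  qed
  have qb: "q * (k * a + 1 - a) \<le> 1 - a"
  proof -
    have "(1-a)^(2*n-3) * (1 + real (2*n-3) * a) \<le> 1" using a0 a6 by (intro pow_bern_up) auto
    then have h1: "(1-a) * ((1-a)^(2*n-3) * (1 + real (2*n-3) * a)) \<le> (1 - a)" using a6 by (simp add: mult_left_le)
    have h2: "(1-a) * (1-a)^(2*n-3) = q"
    proof -
      have "2*n-2 = Suc (2*n-3)" using n2 by arith
      then show ?thesis unfolding q_def by simp
    qed
    have h3: "1 + real (2*n-3) * a = k * a + 1 - a" unfolding k_def using n2 by (simp add: of_nat_diff algebra_simps)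
    have "(1-a) * ((1-a)^(2*n-3) * (1 + real (2*n-3) * a)) = q * (k * a + 1 - a)"
      unfolding h3 h2[symmetric] by (simp only: mult.assoc)
    then show ?thesis using h1 by simp
  qed
  have ident: "(1 - P2) * K2 - (1 - z) * K1 = (2 - a - c) * ((1 - a) - q * (k * a + 1 - a))"
    unfolding hP2 hlh2 z1 K1_def K2_def by (simp add: power2_eq_square algebra_simps)
  have T1a: "(1 - z) * K1 \<le> (1 - P2) * K2"
  proof -
    have "0 \<le> (2 - a - c) * ((1 - a) - q * (k * a + 1 - a))" using cc0 qb by (intro mult_nonneg_nonneg) auto
    then show ?thesis using ident by linarith
  qed
  have K1pos: "K1 > 0" using K10 K00 by simp
  have T1b: "K2 / K1 \<le> 1 + 3/2*w*m*(1-u*w*m) / (2 - m/2 - 9*m*w/8)"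
  proof -
    have "K2 / K1 = 1 + (1 - a) * (2 - a - c) / K1" using K1pos unfolding K1_def K2_def by (simp add: field_simps)
    also have "(1 - a) * (2 - a - c) / K1 \<le> (1 - a) * (3/2 * w) / K0"
    proof (rule frac_le)
      show "0 \<le> (1 - a) * (3/2 * w)" using a6 w0 by simp
      show "(1 - a) * (2 - a - c) \<le> (1 - a) * (3/2 * w)" using cc1 a6 by (intro mult_left_mono) auto
      show "0 < K0" by (rule K00)
      show "K0 \<le> K1" by (rule K10)
    qed
    also have "(1 - a) * (3/2 * w) / K0 = 3/2*w*m*(1-u*w*m) / (2 - m/2 - 9*m*w/8)"
    proof -
      have km: "2 - m/2 - 9*m*w/8 = K0 * m" unfolding K0_def k_def m_def using nne by (simp add: field_simps)
      show ?thesis unfolding ha km using K00 m0 by (simp add: field_simps)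
    qed
    finally show ?thesis by simp
  qed
  have T1: "1 - z \<le> (1 - P2) * (1 + 3/2*w*m*(1-u*w*m) / (2 - m/2 - 9*m*w/8))"
  proof -
    have "1 - z \<le> (1 - P2) * K2 / K1" using T1a K1pos by (simp add: pos_le_divide_eq)
    also have "\<dots> = (1 - P2) * (K2 / K1)" by simp
    also have "\<dots> \<le> (1 - P2) * (1 + 3/2*w*m*(1-u*w*m) / (2 - m/2 - 9*m*w/8))"
      using T1b P21 by (intro mult_left_mono) auto
    finally show ?thesis .
  qed
  have z1': "z \<le> 1" unfolding z_def using a0 a6 by (intro power_le_one) auto
  have zb: "1 - z \<le> 2 * (u * w)"
  proof -
    have "1 + real (2*n) * (-a) \<le> (1 + (-a))^(2*n)" using a6 by (intro Bernoulli_inequality) auto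
    moreover have "real (2*n) * a = 2 * (u * w)" using hna by simp
    ultimately show ?thesis unfolding z_def by simp
  qed
  have T2: "(1 - z) * (2 * (1 - w) / (2 - a)) \<le> 24/11*(1-w)*u*w"
  proof -
    have d1: "2 / (2 - a) \<le> 12/11" using a6 a0 by (simp add: field_simps)
    have "(1 - w) * (2 / (2 - a)) \<le> (1 - w) * (12/11)" using d1 w1 by (intro mult_left_mono) auto
    then have "2 * (1 - w) / (2 - a) \<le> 12/11 * (1 - w)" by (simp add: algebra_simps)
    then have "(1 - z) * (2 * (1 - w) / (2 - a)) \<le> (2 * (u * w)) * (12/11 * (1 - w))"
      using zb z1' w1 a6 by (intro mult_mono) auto
    then show ?thesis by (simp add: algebra_simps)
  qed
  have lnb: "- a - 2 * a\<^sup>2 \<le> ln (1 - a)" using a0 a6 by (intro ln_one_minus_pos_lower_bound) auto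
  have kk: "real (2*n-2) = k" unfolding k_def using n2 by (simp add: of_nat_diff)
  have k0: "0 \<le> k" using k2 by simp
  have lnq: "ln q = k * ln (1 - a)" unfolding q_def kk[symmetric] by (rule ln_realpow)
  have f1b: "1 + u - 2*u*w - 4*u*w*a + 2*a + 4*a*a \<le> exp u * q"
  proof -
    have "q = exp (ln q)" using q0 by simp
    then have "q = exp (k * ln (1 - a))" unfolding lnq .
    then have "exp u * q = exp (u + k * ln (1 - a))" by (simp add: exp_add)
    moreover have "1 + (u + k * ln (1 - a)) \<le> exp (u + k * ln (1 - a))" by (rule exp_ge_add_one_self)
    moreover have "k * (- a - 2 * a\<^sup>2) \<le> k * ln (1 - a)" using lnb k0 by (rule mult_left_mono)
    moreover have "k * (- a - 2 * a\<^sup>2) = - 2*u*w - 4*u*w*a + 2*a + 4*a*a"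
    proof -
      have "k * (- a - 2 * a\<^sup>2) = - (k * a) - 2 * a * (k * a)" by (simp add: power2_eq_square algebra_simps)
      then show ?thesis unfolding hka by (simp add: algebra_simps)
    qed
    ultimately show ?thesis by linarith
  qed
  have f2b: "1 - 2*a + 3/2*a*w \<le> lh\<^sup>2"
  proof -
    have "lh\<^sup>2 = 1 - 2*(a*g) + (a*g)\<^sup>2" unfolding hlh by (simp add: power2_eq_square algebra_simps)
    moreover have "2*(a*g) = 2*a - 3/2*a*w" unfolding g_def by (simp add: algebra_simps)
    ultimately show ?thesis by simp
  qed
  have f20: "0 \<le> 1 - 2*a + 3/2*a*w" using a0 a6 w0 by simp
  have Rb: "(1 + u - 2*u*w - 4*u*w*a + 2*a + 4*a*a) * (1 - 2*a + 3/2*a*w) \<le> exp u * P2"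
  proof (cases "0 \<le> 1 + u - 2*u*w - 4*u*w*a + 2*a + 4*a*a")
    case True
    have "(1 + u - 2*u*w - 4*u*w*a + 2*a + 4*a*a) * (1 - 2*a + 3/2*a*w) \<le> (exp u * q) * lh\<^sup>2"
      using f1b f2b True f20 by (intro mult_mono) auto
    then show ?thesis unfolding hP2 by (simp add: algebra_simps)
  next
    case False
    then have "(1 + u - 2*u*w - 4*u*w*a + 2*a + 4*a*a) * (1 - 2*a + 3/2*a*w) \<le> 0"
      using f20 by (simp add: mult_nonpos_nonneg)
    moreover have "0 \<le> exp u * P2" using P20 by simp
    ultimately show ?thesis by linarith
  qed
  have PI: "1 + 3/2*w*m*(1-u*w*m) / (2 - m/2 - 9*m*w/8) + 24/11*(1-w)*u*w
     \<le> 2 * (1 + u - 2*u*w - 4*u*w*(u*w*m) + 2*(u*w*m) + 4*(u*w*m)*(u*w*m)) * (1 - 2*(u*w*m) + 3/2*(u*w*m)*w)"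
    using u0 u3 w0 w1 m0 m2 by (intro poly_ineq) auto
  have PI': "1 + 3/2*w*m*(1-u*w*m) / (2 - m/2 - 9*m*w/8) + 24/11*(1-w)*u*w \<le> 2 * (exp u * P2)"
  proof -
    have Rb2: "(1 + u - 2*u*w - 4*u*w*(u*w*m) + 2*(u*w*m) + 4*(u*w*m)*(u*w*m)) * (1 - 2*(u*w*m) + 3/2*(u*w*m)*w) \<le> exp u * P2"
      unfolding ha by (rule Rb)
    have "2 * (1 + u - 2*u*w - 4*u*w*(u*w*m) + 2*(u*w*m) + 4*(u*w*m)*(u*w*m)) * (1 - 2*(u*w*m) + 3/2*(u*w*m)*w) \<le> 2 * (exp u * P2)"
      using mult_left_mono[OF Rb2, of 2] by (simp only: mult.assoc)
    then show ?thesis using PI by (rule order_trans[rotated])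
  qed
  have P2' : "0 \<le> 1 - P2" using P21 by simp
  have "(1 - l^(2*n)) / (1 - l\<^sup>2) * (D - P2 * \<alpha> * \<eta>) = (1 - z) + (1 - z) * (2 * (1 - w) / (2 - a)) * (1 - P2)"
    by (rule lhs_eq)
  also have "\<dots> \<le> (1 - P2) * (1 + 3/2*w*m*(1-u*w*m) / (2 - m/2 - 9*m*w/8)) + (24/11*(1-w)*u*w) * (1 - P2)"
    using T1 T2 P2' by (intro add_mono mult_right_mono) auto
  also have "\<dots> = (1 - P2) * (1 + 3/2*w*m*(1-u*w*m) / (2 - m/2 - 9*m*w/8) + 24/11*(1-w)*u*w)"
    by (simp add: algebra_simps)
  also have "\<dots> \<le> (1 - P2) * (2 * (exp u * P2))" using PI' P2' by (intro mult_left_mono) auto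
  also have "\<dots> = 2 * exp (1/t) * P2 * (1 - P2)" unfolding u_def by (simp add: algebra_simps)
  finally show ?thesis .
qed



lemma final_abs:
  fixes P2 \<alpha> \<eta> G D X Y c :: real
  assumes P: "0 < P2" "P2 < 1" and ap: "\<alpha> > 0" and ep: "\<eta> > 0" and G: "0 \<le> G" and Dp: "D > 0"
    and X: "X = \<alpha> * \<eta> / D" and Y: "P2 * X \<le> Y" and c: "0 \<le> c"
    and key: "G * (D - P2 * \<alpha> * \<eta>) \<le> c * P2 * (1 - P2)"
  shows "Y * (1/\<alpha> - \<eta> * G / (1 - P2)) + \<eta> * G / (1 - P2) \<le> (1 + c) * Y / \<alpha>"
proof -
  define vs where "vs = \<eta> * G / (1 - P2)"
  have vs0: "0 \<le> vs" unfolding vs_def using ep G P by simp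
  have X0: "0 \<le> X" unfolding X using ap ep Dp by simp
  have "\<alpha> * vs * (1 - Y) \<le> \<alpha> * vs * (1 - P2 * X)"
    using Y vs0 ap by (intro mult_left_mono) auto
  also have "\<alpha> * vs * (1 - P2 * X) = X * (G * (D - P2 * \<alpha> * \<eta>)) / (1 - P2)"
    unfolding vs_def X using Dp P by (simp add: field_simps)
  also have "\<dots> \<le> X * (c * P2 * (1 - P2)) / (1 - P2)"
    using key X0 P by (intro divide_right_mono mult_left_mono) auto
  also have "\<dots> = c * (P2 * X)" using P by (simp add: field_simps)
  also have "\<dots> \<le> c * Y" using Y c by (rule mult_left_mono)
  finally have h: "\<alpha> * vs * (1 - Y) \<le> c * Y" .
  have "vs * (1 - Y) \<le> c * Y / \<alpha>" using h ap by (simp add: field_simps)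
  have e1: "Y * (1/\<alpha> - vs) + vs = Y / \<alpha> + vs * (1 - Y)" by (simp add: algebra_simps)
  have e2: "(1 + c) * Y / \<alpha> = Y / \<alpha> + c * Y / \<alpha>" by (simp add: algebra_simps add_divide_distrib)
  have "Y * (1/\<alpha> - vs) + vs \<le> (1 + c) * Y / \<alpha>" unfolding e1 e2 using \<open>vs * (1 - Y) \<le> c * Y / \<alpha>\<close> by linarith
  then show ?thesis unfolding vs_def .
qed

lemma exp_third: assumes "u \<le> 1/3" shows "exp u \<le> (5/2::real)"
proof (rule ccontr)
  assume "\<not> exp u \<le> 5/2"
  then have "(5/2::real)^3 < (exp u)^3" by (intro power_strict_mono) auto
  also have "(exp u)^3 = exp (3 * u)" using exp_of_nat_mult[of 3 u] by simp
  also have "\<dots> \<le> exp 1" using assms by simp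
  also have "\<dots> \<le> 3" by (rule exp_le)
  finally show False by (simp add: power3_eq_cube)
qed

lemma K_bound:
  fixes lam X kdot :: real and n K :: nat
  assumes l: "0 < lam" "lam < 1" and X: "0 < X" "X < 1" and n: "n > 0"
    and kd: "kdot = 1 / (2 * real n) * log lam X - 1" and K: "K = nat \<lceil>kdot\<rceil>"
  shows "X \<le> lam ^ (2 * n * K)"
proof -
  have Lg: "log lam X > 0" using l X by (simp add: log_def divide_neg_neg)
  have kd1: "kdot > -1" using kd Lg n by simp
  have "real K = of_int \<lceil>kdot\<rceil>" using K kd1 by simp
  then have "real K < kdot + 1" by linarith
  then have "2 * real n * real K < log lam X" using kd n by (simp add: field_simps)
  then have "lam powr (log lam X) \<le> lam powr (2 * real n * real K)"
    using l by (intro powr_mono') auto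
  moreover have "lam powr (log lam X) = X" using l X by simp
  moreover have "lam powr (2 * real n * real K) = lam ^ (2 * n * K)"
    using l by (simp add: powr_realpow[symmetric])
  ultimately show ?thesis by simp
qed



lemma fac_eq:
  "(\<lambda>j. 1 - sgld_eta \<alpha> \<beta> xh n / 2 * (\<alpha> + real n * \<beta> * (sgld_x xh n r j)\<^sup>2))
   = per_fac n r (sgld_lambda_hat \<alpha> \<beta> xh n) (sgld_lambda \<alpha> \<beta> xh n)"
proof
  fix j
  show "1 - sgld_eta \<alpha> \<beta> xh n / 2 * (\<alpha> + real n * \<beta> * (sgld_x xh n r j)\<^sup>2)
     = per_fac n r (sgld_lambda_hat \<alpha> \<beta> xh n) (sgld_lambda \<alpha> \<beta> xh n) j"
    by (cases "j mod n + 1 = r")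
      (simp_all add: per_fac_def sgld_x_def sgld_lambda_def sgld_lambda_hat_def power_divide algebra_simps)
qed

theorem lemmaA4:
  fixes \<alpha> \<beta> xh c :: real and n :: nat
    and M :: "'w measure" and \<theta>0 :: "'w \<Rightarrow> real" and \<xi> :: "nat \<Rightarrow> 'w \<Rightarrow> real"
  assumes pos: "\<alpha> > 0" "\<beta> > 0" "xh > 0" "c > 0" and n2: "n \<ge> 2"
    and M: "prob_space M"
    and init: "distributed M lborel \<theta>0 (normal_density 0 (1 / sqrt \<alpha>))"
    and noise: "\<And>j. distributed M lborel (\<xi> j) (normal_density 0 1)"
    and indep: "prob_space.indep_vars M (\<lambda>_. borel)
                  (\<lambda>i. case i of None \<Rightarrow> \<theta>0 | Some j \<Rightarrow> \<xi> j) UNIV"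
    and hx: "xh\<^sup>2 * \<beta> > 3"
    and hn: "real n > 1 / (2 * \<alpha> * xh\<^sup>2 * \<beta>) - 1 / (xh\<^sup>2 * \<beta>)"
  shows "let \<eta> = sgld_eta \<alpha> \<beta> xh n; lam = sgld_lambda \<alpha> \<beta> xh n;
             lamh = sgld_lambda_hat \<alpha> \<beta> xh n;
             kdot = 1 / (2 * real n) * log lam (1 / (1 + 1 / (\<alpha> * \<eta>) * (1 - lam\<^sup>2))) - 1;
             K = nat \<lceil>kdot\<rceil>;
             var = (\<lambda>r. prob_space.variance M
                      (\<lambda>\<omega>. sgld_iter \<alpha> \<beta> xh c n r (\<theta>0 \<omega>) (\<lambda>j. \<xi> j \<omega>) (K * n + n)))
         in var 1 \<le> (1 + 2 * exp (1 / (xh\<^sup>2 * \<beta>))) * (lamh * lam ^ (n - 1))\<^sup>2 * (1 / \<alpha>)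
                        * (lamh * lam ^ (n - 1)) ^ (2 * K)
            \<and> (\<forall>r \<in> {2..n}. var r \<le> 6 * (lamh * lam ^ (n - r))\<^sup>2 * (1 / \<alpha>)
                        * (lamh * lam ^ (n - 1)) ^ (2 * K))"
proof -
  define t where "t = xh\<^sup>2 * \<beta>"
  define A where "A = \<alpha> + real n * t"
  define \<eta> where "\<eta> = sgld_eta \<alpha> \<beta> xh n"
  define lam where "lam = sgld_lambda \<alpha> \<beta> xh n"
  define lamh where "lamh = sgld_lambda_hat \<alpha> \<beta> xh n"
  define kdot where "kdot = 1 / (2 * real n) * log lam (1 / (1 + 1 / (\<alpha> * \<eta>) * (1 - lam\<^sup>2))) - 1"
  define K where "K = nat \<lceil>kdot\<rceil>"
  define var where "var = (\<lambda>r. prob_space.variance M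
                      (\<lambda>\<omega>. sgld_iter \<alpha> \<beta> xh c n r (\<theta>0 \<omega>) (\<lambda>j. \<xi> j \<omega>) (K * n + n)))"
  have ap: "\<alpha> > 0" using pos by simp
  have tp: "t > 3" using hx unfolding t_def .
  have hn2: "real n \<ge> 2" using n2 by simp
  have nt: "real n * t > 6"
  proof -
    have "2 * t \<le> real n * t" using hn2 tp by (intro mult_right_mono) auto
    then show ?thesis using tp by linarith
  qed
  have Apos: "A > 6" unfolding A_def using ap nt by linarith
  have hA: "\<alpha> + real n * xh\<^sup>2 * \<beta> = A" unfolding A_def t_def by (simp add: algebra_simps)
  have heta: "\<eta> = 2 / A\<^sup>2" unfolding \<eta>_def sgld_eta_def hA ..
  have hlam: "lam = 1 - 1/A" unfolding lam_def sgld_lambda_def \<eta>_def[symmetric] heta hA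
    using Apos by (simp add: power2_eq_square field_simps)
  have hlamh: "lamh = 1 - (\<alpha> + real n * t / 4) / A\<^sup>2"
  proof -
    have e: "\<alpha> + real n * (xh\<^sup>2 / 4) * \<beta> = \<alpha> + real n * t / 4" unfolding t_def by (simp add: algebra_simps)
    show ?thesis unfolding lamh_def sgld_lambda_hat_def \<eta>_def[symmetric] heta e
      using Apos by (simp add: power2_eq_square field_simps)
  qed
  have Ane: "A \<noteq> 0" using Apos by simp
  have lam0: "0 < lam" and lam1: "lam < 1" unfolding hlam using Apos by (auto simp: field_simps)
  have g0: "0 \<le> (\<alpha> + real n * t / 4) / A\<^sup>2" using ap nt by simp
  have lamh1: "lamh \<le> 1" unfolding hlamh using g0 by simp
  have lamlh: "lam \<le> lamh"
  proof -
    have "lamh - lam = (A - (\<alpha> + real n * t / 4)) / A\<^sup>2" unfolding hlamh hlam using Ane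
      by (simp add: power2_eq_square field_simps)
    moreover have "A - (\<alpha> + real n * t / 4) = 3/4 * (real n * t)" unfolding A_def by simp
    ultimately have "lamh - lam = (3/4 * (real n * t)) / A\<^sup>2" by simp
    moreover have "0 \<le> (3/4 * (real n * t)) / A\<^sup>2" using nt by simp
    ultimately show ?thesis by simp
  qed
  have lamh0: "0 < lamh" using lam0 lamlh by simp
  have eta0: "\<eta> > 0" unfolding heta using Ane by simp
  define P2 where "P2 = lamh\<^sup>2 * lam^(2*(n-1))"
  have lp1: "lam^(2*(n-1)) < 1" using lam0 lam1 n2 by (simp add: power_less_one_iff)
  have lp0: "0 < lam^(2*(n-1))" using lam0 by simp
  have lh2: "lamh\<^sup>2 \<le> 1" using lamh0 lamh1 by (simp add: power_le_one)
  have P20: "0 < P2" unfolding P2_def using lamh0 lp0 by simp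
  have P21: "P2 < 1"
  proof -
    have "P2 \<le> lam^(2*(n-1))" unfolding P2_def using lh2 lp0 by (simp add: mult_left_le_one_le)
    then show ?thesis using lp1 by simp
  qed
  define D where "D = \<alpha> * \<eta> + 1 - lam\<^sup>2"
  have lam21: "lam\<^sup>2 < 1" using lam0 lam1 by (simp add: power_less_one_iff)
  have aeta0: "\<alpha> * \<eta> > 0" using ap eta0 by simp
  have Dp: "D > 0" unfolding D_def using aeta0 lam21 by simp
  define X where "X = \<alpha> * \<eta> / D"
  have X0: "0 < X" and X1: "X < 1" unfolding X_def D_def using aeta0 lam21 by (auto simp: field_simps)
  have hX: "1 / (1 + 1 / (\<alpha> * \<eta>) * (1 - lam\<^sup>2)) = X"
  proof -
    have "1 + 1 / (\<alpha> * \<eta>) * (1 - lam\<^sup>2) = D / (\<alpha> * \<eta>)" unfolding D_def using ap eta0 by (simp add: field_simps)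
    then show ?thesis unfolding X_def using aeta0 Dp by simp
  qed
  have kd': "kdot = 1 / (2 * real n) * log lam X - 1" unfolding kdot_def hX ..
  have KB: "X \<le> lam ^ (2 * n * K)"
    by (rule K_bound[OF lam0 lam1 X0 X1 _ kd' K_def]) (use n2 in simp)
  have P2ge: "lam^(2*n) \<le> P2"
  proof -
    have "lam\<^sup>2 \<le> lamh\<^sup>2" using lam0 lamlh by (simp add: power_mono)
    then have "lam\<^sup>2 * lam^(2*(n-1)) \<le> P2" unfolding P2_def using lp0 by (simp add: mult_right_mono)
    moreover have "lam\<^sup>2 * lam^(2*(n-1)) = lam^(2*n)"
    proof -
      have "2*n = 2 + 2*(n-1)" using n2 by simp
      then show ?thesis by (metis power_add)
    qed
    ultimately show ?thesis by simp
  qed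
  have PK: "X \<le> P2^K"
  proof -
    have "lam ^ (2 * n * K) = (lam^(2*n))^K" by (simp add: power_mult)
    also have "\<dots> \<le> P2^K" using P2ge lam0 by (intro power_mono) auto
    finally show ?thesis using KB by simp
  qed
  define Y where "Y = P2^(Suc K)"
  have YX: "P2 * X \<le> Y" unfolding Y_def using PK P20 by (simp add: mult_left_mono)
  define H where "H = vrec (\<lambda>_. lam) 0 1 n"
  have H0: "0 \<le> H" unfolding H_def by (rule vrec_nonneg) auto
  have Heq: "H = (1 - lam^(2*n)) / (1 - lam\<^sup>2)"
    using H_closed[of lam n] lam21 unfolding H_def by (simp add: field_simps)
  have coreI: "H * (D - P2 * \<alpha> * \<eta>) \<le> 2 * exp (1/t) * P2 * (1 - P2)"
    unfolding Heq by (rule core[OF ap tp n2 A_def heta hlam hlamh P2_def D_def])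
  have E0: "0 \<le> D - P2 * \<alpha> * \<eta>"
  proof -
    have "D - P2 * \<alpha> * \<eta> = \<alpha> * \<eta> * (1 - P2) + (1 - lam\<^sup>2)" unfolding D_def by (simp add: algebra_simps)
    then show ?thesis using aeta0 P21 lam21 by simp
  qed
  have varr: "var r = Y * (1/\<alpha> - \<eta> * vrec (per_fac n r lamh lam) 0 1 n / (1 - P2))
                      + \<eta> * vrec (per_fac n r lamh lam) 0 1 n / (1 - P2)"
    if r: "1 \<le> r" "r \<le> n" for r
  proof -
    define fa where "fa = per_fac n r lamh lam"
    define G where "G = vrec fa 0 1 n"
    define V where "V = (\<lambda>k. vrec fa (1/\<alpha>) \<eta> (k*n))"
    have v1: "var r = vrec fa (1/\<alpha>) \<eta> (K * n + n)"
      unfolding var_def fa_def lamh_def lam_def \<eta>_def fac_eq[symmetric]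
      by (rule var_iter[OF ap M init noise indep])
    have rec: "V (Suc k) = P2 * V k + \<eta> * G" for k
    proof -
      have "V (Suc k) = vrec fa (1/\<alpha>) \<eta> (k*n + n)" unfolding V_def by (simp add: add.commute)
      also have "\<dots> = (\<Prod>l<n. (fa l)\<^sup>2) * vrec fa (1/\<alpha>) \<eta> (k*n) + \<eta> * vrec fa 0 1 n"
        by (rule vrec_epoch) (simp add: fa_def per_fac_per)
      also have "(\<Prod>l<n. (fa l)\<^sup>2) = P2" unfolding fa_def P2_def using r by (rule per_fac_prod)
      finally show ?thesis unfolding V_def G_def .
    qed
    have "V (Suc K) = P2^(Suc K) * (V 0 - \<eta> * G / (1 - P2)) + \<eta> * G / (1 - P2)"
      by (rule vrec_closed[of V P2 "\<eta> * G", OF rec]) (use P21 in simp)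
    moreover have "V 0 = 1/\<alpha>" unfolding V_def by simp
    moreover have "V (Suc K) = var r" unfolding V_def v1 by (simp add: add.commute)
    ultimately show ?thesis unfolding Y_def G_def fa_def by simp
  qed
  have lam2p: "0 < lam\<^sup>2" "lam\<^sup>2 \<le> 1" using lam0 lam21 by auto
  have lsq: "(lam ^ (n - 1))\<^sup>2 = lam^(2*(n-1))" by (simp add: power_mult[symmetric] mult.commute)
  have P2sq: "(lamh * lam ^ (n - 1))\<^sup>2 = P2" unfolding P2_def power_mult_distrib lsq ..
  have Y1: "Y = P2 * (lamh * lam ^ (n - 1)) ^ (2 * K)"
  proof -
    have "(lamh * lam ^ (n - 1)) ^ (2 * K) = ((lamh * lam ^ (n - 1))\<^sup>2)^K" by (simp add: power_mult)
    also have "\<dots> = P2^K" unfolding power_mult_distrib lsq P2_def ..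
    finally have "(lamh * lam ^ (n - 1)) ^ (2 * K) = P2^K" .
    then show ?thesis unfolding Y_def by simp
  qed
  have part1: "var 1 \<le> (1 + 2 * exp (1 / (xh\<^sup>2 * \<beta>))) * (lamh * lam ^ (n - 1))\<^sup>2 * (1 / \<alpha>)
                        * (lamh * lam ^ (n - 1)) ^ (2 * K)"
  proof -
    define G where "G = vrec (per_fac n 1 lamh lam) 0 1 n"
    have G0: "0 \<le> G" unfolding G_def by (rule vrec_nonneg) auto
    have GH: "G \<le> H" unfolding G_def H_def
      using G_bound[of 1 n lam lamh n] n2 lam0 lam1 lamh0 lamh1 by auto
    have key: "G * (D - P2 * \<alpha> * \<eta>) \<le> (2 * exp (1/t)) * P2 * (1 - P2)"
    proof -
      have "G * (D - P2 * \<alpha> * \<eta>) \<le> H * (D - P2 * \<alpha> * \<eta>)" using GH E0 by (rule mult_right_mono)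
      then show ?thesis using coreI by simp
    qed
    have "var 1 \<le> (1 + 2 * exp (1/t)) * Y / \<alpha>"
    proof -
      have n1: "1 \<le> n" using n2 by simp
      have c0: "0 \<le> 2 * exp (1/t)" by simp
      show ?thesis unfolding varr[OF order_refl n1] G_def[symmetric]
        by (rule final_abs[OF P20 P21 ap eta0 G0 Dp X_def YX c0 key])
    qed
    also have "\<dots> = (1 + 2 * exp (1 / (xh\<^sup>2 * \<beta>))) * (lamh * lam ^ (n - 1))\<^sup>2 * (1 / \<alpha>)
                        * (lamh * lam ^ (n - 1)) ^ (2 * K)"
      unfolding Y1 P2sq t_def by simp
    finally show ?thesis .
  qed
  have part2: "var r \<le> 6 * (lamh * lam ^ (n - r))\<^sup>2 * (1 / \<alpha>) * (lamh * lam ^ (n - 1)) ^ (2 * K)"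
    if r: "r \<in> {2..n}" for r
  proof -
    have r1: "1 \<le> r" "r \<le> n" "2 \<le> r" using r by auto
    define G where "G = vrec (per_fac n r lamh lam) 0 1 n"
    define cc where "cc = 6 / lam\<^sup>2 - 1"
    have G0: "0 \<le> G" unfolding G_def by (rule vrec_nonneg) auto
    have GH: "G \<le> H / lam\<^sup>2" unfolding G_def H_def
      using G_bound[of r n lam lamh n] r1 lam0 lam1 lamh0 lamh1 by auto
    have eu: "exp (1/t) \<le> 5/2" using tp by (intro exp_third) (simp add: field_simps)
    have cc0: "0 \<le> cc" unfolding cc_def using lam2p by (simp add: field_simps)
    have c2: "2 * exp (1/t) / lam\<^sup>2 \<le> cc"
    proof -
      have "2 * exp (1/t) + lam\<^sup>2 \<le> 6" using eu lam2p by simp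
      then show ?thesis unfolding cc_def using lam2p by (simp add: field_simps)
    qed
    have PP: "0 \<le> P2 * (1 - P2)" using P20 P21 by simp
    have key: "G * (D - P2 * \<alpha> * \<eta>) \<le> cc * P2 * (1 - P2)"
    proof -
      have "G * (D - P2 * \<alpha> * \<eta>) \<le> H / lam\<^sup>2 * (D - P2 * \<alpha> * \<eta>)" using GH E0 by (rule mult_right_mono)
      also have "\<dots> = (H * (D - P2 * \<alpha> * \<eta>)) / lam\<^sup>2" by simp
      also have "\<dots> \<le> (2 * exp (1/t) * P2 * (1 - P2)) / lam\<^sup>2" using coreI lam2p by (intro divide_right_mono) auto
      also have "\<dots> = (2 * exp (1/t) / lam\<^sup>2) * (P2 * (1 - P2))" by simp
      also have "\<dots> \<le> cc * (P2 * (1 - P2))" using c2 PP by (rule mult_right_mono)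
      finally show ?thesis by (simp add: mult.assoc)
    qed
    have "var r \<le> (1 + cc) * Y / \<alpha>"
      unfolding varr[OF r1(1) r1(2)] G_def[symmetric]
      by (rule final_abs[OF P20 P21 ap eta0 G0 Dp X_def YX cc0 key])
    also have "\<dots> = (6 / lam\<^sup>2) * P2 * (1/\<alpha>) * (lamh * lam ^ (n - 1)) ^ (2 * K)"
      unfolding Y1 cc_def by simp
    also have "\<dots> \<le> 6 * (lamh * lam ^ (n - r))\<^sup>2 * (1 / \<alpha>) * (lamh * lam ^ (n - 1)) ^ (2 * K)"
    proof -
      define Q where "Q = (lamh * lam ^ (n - r))\<^sup>2"
      have "P2 = Q * lam^(2*(r-1))"
      proof -
        have "2*(n-1) = 2*(n-r) + 2*(r-1)" using r1 by simp
        then have "lam^(2*(n-1)) = lam^(2*(n-r)) * lam^(2*(r-1))" by (simp add: power_add)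
        moreover have "(lam ^ (n - r))\<^sup>2 = lam^(2*(n-r))" by (simp add: power_mult[symmetric] mult.commute)
        ultimately show ?thesis unfolding P2_def Q_def power_mult_distrib by simp
      qed
      moreover have "lam^(2*(r-1)) \<le> lam\<^sup>2"
      proof -
        have "lam^(2*(r-1)) = (lam\<^sup>2)^(r-1)" by (simp add: power_mult)
        also have "\<dots> \<le> (lam\<^sup>2)^1" using lam2p r1 by (intro power_decreasing) auto
        finally show ?thesis by simp
      qed
      moreover have "0 \<le> Q" unfolding Q_def by simp
      ultimately have "P2 \<le> Q * lam\<^sup>2" by (simp add: mult_left_mono)
      then have "(6 / lam\<^sup>2) * P2 \<le> 6 * Q" using lam2p by (simp add: field_simps)
      moreover have "0 \<le> (1/\<alpha>) * (lamh * lam ^ (n - 1)) ^ (2 * K)" using ap by simp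
      ultimately have "(6 / lam\<^sup>2) * P2 * ((1/\<alpha>) * (lamh * lam ^ (n - 1)) ^ (2 * K)) \<le> 6 * Q * ((1/\<alpha>) * (lamh * lam ^ (n - 1)) ^ (2 * K))"
        by (rule mult_right_mono)
      then show ?thesis unfolding Q_def by (simp add: mult.assoc)
    qed
    finally show ?thesis .
  qed
  have main: "var 1 \<le> (1 + 2 * exp (1 / (xh\<^sup>2 * \<beta>))) * (lamh * lam ^ (n - 1))\<^sup>2 * (1 / \<alpha>)
                        * (lamh * lam ^ (n - 1)) ^ (2 * K)
            \<and> (\<forall>r \<in> {2..n}. var r \<le> 6 * (lamh * lam ^ (n - r))\<^sup>2 * (1 / \<alpha>)
                        * (lamh * lam ^ (n - 1)) ^ (2 * K))"
    using part1 part2 by blast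
  show ?thesis unfolding Let_def \<eta>_def[symmetric] lam_def[symmetric] lamh_def[symmetric]
    kdot_def[symmetric] K_def[symmetric] using main unfolding var_def .
qed

end
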